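(* Let $i\in\mathbb{N}_0$ and let $\alpha,\beta\in\mathbb{C}$. Then $$F^{1:1;2}_{1:0;1}\left[\begin{matrix}\alpha: & \beta-2-i\,; & 2+i,\ \tfrac12\alpha+1\,;\\ \beta: & -\,; & \tfrac12\alpha\,;\end{matrix}\ -1,\ -1\right] =\frac{2^{-2-\alpha}\,\Gamma\!\left(\tfrac12\beta\right)}{(i+1)!\,\Gamma\!\left(\tfrac12\beta-i-2\right)}\sum_{r=0}^{i}(-1)^r\binom{i}{r}\frac{\Gamma\!\left(\frac14\beta-1+\frac{r-i}{2}\right)}{\Gamma\!\left(\frac14\beta+1+\frac{r-i}{2}\right)}$$ and $$F^{1:1;2}_{1:0;1}\left[\begin{matrix}\alpha: & \beta-2+i\,; & 2-i,\ \tfrac12\alpha+1\,;\\ \beta: & -\,; & \tfrac12\alpha\,;\end{matrix}\ -1,\ -1\right] =\frac{2^{-2-\alpha}\,\Gamma\!\left(\tfrac12\beta\right)}{\Gamma\!\left(\tfrac12\beta+i-2\right)}\sum_{r=0}^{i}\binom{i}{r}\frac{\Gamma\!\left(\frac14\beta-1+\frac{r+i}{2}\right)}{\Gamma\!\left(\frac14\beta+1+\frac{r-i}{2}\right)}.$$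
   Context: For $\lambda\in\mathbb{C}$ and $n\in\mathbb{N}_0$, $(\lambda)_0=1$ and $(\lambda)_n=\lambda(\lambda+1)\cdots(\lambda+n-1)$; $\Gamma$ is Euler's Gamma function and $\binom{i}{r}$ the binomial coefficient. The (generalized) Kampé de Fériet function is defined by $$F^{H:A;B}_{G:C;D}\left[\begin{matrix}(h_H): & (a_A)\,; & (b_B)\,;\\ (g_G): & (c_C)\,; & (d_D)\,;\end{matrix}\ x,\ y\right]=\sum_{m=0}^\infty\sum_{n=0}^\infty\frac{\prod_{j=1}^H(h_j)_{m+n}\prod_{j=1}^A(a_j)_m\prod_{j=1}^B(b_j)_n}{\prod_{j=1}^G(g_j)_{m+n}\prod_{j=1}^C(c_j)_m\prod_{j=1}^D(d_j)_n}\frac{x^m}{m!}\frac{y^n}{n!},$$ where a dash "$-$" denotes an empty list of parameters (empty products equal $1$). Parameters are tacitly assumed to be such that the double series converges, no denominator parameter is a non-positive integer, and all Gamma values appearing are finite. *)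

theory Defs
  imports "HOL-Analysis.Analysis"
begin

text \<open>Terms of the generalized Kampe de Feriet double series
  F^{H:A;B}_{G:C;D}[(h):(a);(b); (g):(c);(d); x, y]; parameter lists are
  given as lists (the empty list corresponds to a dash).\<close>

definition kdf_term ::
  "complex list \<Rightarrow> complex list \<Rightarrow> complex list \<Rightarrow>
   complex list \<Rightarrow> complex list \<Rightarrow> complex list \<Rightarrow>
   complex \<Rightarrow> complex \<Rightarrow> nat \<times> nat \<Rightarrow> complex" where
  "kdf_term hs as bs gs cs ds x y = (\<lambda>(m, n).
     (prod_list (map (\<lambda>h. pochhammer h (m + n)) hs)
      * prod_list (map (\<lambda>a. pochhammer a m) as)
      * prod_list (map (\<lambda>b. pochhammer b n) bs))
     / (prod_list (map (\<lambda>g. pochhammer g (m + n)) gs)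
      * prod_list (map (\<lambda>c. pochhammer c m) cs)
      * prod_list (map (\<lambda>d. pochhammer d n) ds))
     * (x ^ m / fact m) * (y ^ n / fact n))"

text \<open>Convergence of the double series (unconditional summation over all
  index pairs (m,n), which for complex numbers is absolute convergence).\<close>

definition kdf_converges ::
  "complex list \<Rightarrow> complex list \<Rightarrow> complex list \<Rightarrow>
   complex list \<Rightarrow> complex list \<Rightarrow> complex list \<Rightarrow>
   complex \<Rightarrow> complex \<Rightarrow> bool" where
  "kdf_converges hs as bs gs cs ds x y \<longleftrightarrow>
     kdf_term hs as bs gs cs ds x y summable_on UNIV"

definition KdF ::
  "complex list \<Rightarrow> complex list \<Rightarrow> complex list \<Rightarrow>
   complex list \<Rightarrow> complex list \<Rightarrow> complex list \<Rightarrow>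
   complex \<Rightarrow> complex \<Rightarrow> complex" where
  "KdF hs as bs gs cs ds x y = infsum (kdf_term hs as bs gs cs ds x y) UNIV"

end

theory Submission
  imports Defs "HOL-Analysis.Analysis"
begin


lemma pascal_sum:
  fixes f :: "nat \<Rightarrow> 'a::comm_ring_1"
  shows "(\<Sum>r\<le>Suc n. of_nat (Suc n choose r) * f r)
       = (\<Sum>r\<le>n. of_nat (n choose r) * (f r + f (Suc r)))"
proof -
  have "(\<Sum>r\<le>Suc n. of_nat (Suc n choose r) * f r)
      = f 0 + (\<Sum>r\<le>n. of_nat (Suc n choose Suc r) * f (Suc r))"
    by (subst sum.atMost_Suc_shift) simp
  also have "\<dots> = f 0 + (\<Sum>r\<le>n. of_nat (n choose r) * f (Suc r))
                 + (\<Sum>r\<le>n. of_nat (n choose Suc r) * f (Suc r))"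
    by (simp add: sum.distrib algebra_simps)
  also have "(\<Sum>r\<le>n. of_nat (n choose r) * f r) = f 0 + (\<Sum>r<n. of_nat (n choose Suc r) * f (Suc r))"
    by (subst sum.atMost_shift) auto
  moreover have "(\<Sum>r\<le>n. of_nat (n choose Suc r) * f (Suc r)) = (\<Sum>r<n. of_nat (n choose Suc r) * f (Suc r))"
    by (simp add: lessThan_Suc_atMost[symmetric] binomial_eq_0)
  ultimately show ?thesis by (simp add: sum.distrib algebra_simps)
qed

lemma absorb_sum:
  fixes f :: "nat \<Rightarrow> 'a::comm_ring_1"
  shows "(\<Sum>r\<le>Suc n. of_nat (Suc n choose r) * of_nat r * f r)
       = of_nat (Suc n) * (\<Sum>r\<le>n. of_nat (n choose r) * f (Suc r))"
proof -
  have "(\<Sum>r\<le>Suc n. of_nat (Suc n choose r) * of_nat r * f r)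
      = (\<Sum>r\<le>n. of_nat (Suc n choose Suc r) * of_nat (Suc r) * f (Suc r))"
    by (subst sum.atMost_Suc_shift) simp
  also have "\<dots> = (\<Sum>r\<le>n. of_nat (Suc n) * (of_nat (n choose r) * f (Suc r)))"
  proof (rule sum.cong[OF refl])
    fix r
    have "(Suc n choose Suc r) * Suc r = Suc n * (n choose r)"
      using Suc_times_binomial_eq[of n r] by simp
    hence "of_nat (Suc n choose Suc r) * of_nat (Suc r) = (of_nat (Suc n) * of_nat (n choose r) :: 'a)"
      by (metis of_nat_mult)
    thus "of_nat (Suc n choose Suc r) * of_nat (Suc r) * f (Suc r) = of_nat (Suc n) * (of_nat (n choose r) * f (Suc r))"
      by (simp add: algebra_simps)
  qed
  finally show ?thesis by (simp add: sum_distrib_left)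
qed

lemma poch_nz:
  fixes w :: "'a::field_char_0"
  assumes "\<And>r. r < n \<Longrightarrow> w + of_nat r \<noteq> 0"
  shows "pochhammer w n \<noteq> 0"
proof
  assume "pochhammer w n = 0"
  then obtain k where "k < n" "w = - of_nat k" by (auto simp: pochhammer_eq_0_iff)
  with assms[of k] show False by simp
qed

lemma aux_frac: "(P::complex) \<noteq> 0 \<Longrightarrow> w \<noteq> 0 \<Longrightarrow> w + k \<noteq> 0 \<Longrightarrow>
   F / P - F / (P*(w+k)/w) = k*F/(P*(w+k))"
proof -
  assume a: "P \<noteq> 0" "w \<noteq> 0" "w + k \<noteq> 0"
  have "F / (P*(w+k)/w) = F * w / (P*(w+k))" by simp
  moreover have "F / P = F * (w+k) / (P*(w+k))" using a by simp
  ultimately show ?thesis by (simp add: diff_divide_distrib[symmetric] algebra_simps)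
qed

lemma alt_recip_sum:
  fixes w :: complex
  assumes "\<And>r. r \<le> i \<Longrightarrow> w + of_nat r \<noteq> 0"
  shows "(\<Sum>r\<le>i. (-1)^r * of_nat (i choose r) / (w + of_nat r)) = fact i / pochhammer w (Suc i)"
  using assms
proof (induction i arbitrary: w)
  case 0
  then show ?case by simp
next
  case (Suc i)
  have h0: "\<And>r. r \<le> i \<Longrightarrow> w + of_nat r \<noteq> 0" using Suc.prems by simp
  have h1: "\<And>r. r \<le> i \<Longrightarrow> (w+1) + of_nat r \<noteq> 0" using Suc.prems[of "Suc _"] by (simp add: add.assoc)
  have "(\<Sum>r\<le>Suc i. (-1)^r * of_nat (Suc i choose r) / (w + of_nat r))
      = (\<Sum>r\<le>Suc i. of_nat (Suc i choose r) * ((-1)^r / (w + of_nat r)))"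
    by (simp add: algebra_simps)
  also have "\<dots> = (\<Sum>r\<le>i. of_nat (i choose r) * ((-1)^r / (w + of_nat r) + (-1)^Suc r / (w + of_nat (Suc r))))"
    by (rule pascal_sum)
  also have "\<dots> = (\<Sum>r\<le>i. (-1)^r * of_nat (i choose r) / (w + of_nat r))
                 - (\<Sum>r\<le>i. (-1)^r * of_nat (i choose r) / ((w+1) + of_nat r))"
    by (simp add: sum_subtractf[symmetric] algebra_simps add_divide_distrib diff_divide_distrib)
  also have "\<dots> = fact i / pochhammer w (Suc i) - fact i / pochhammer (w+1) (Suc i)"
    using Suc.IH[OF h0] Suc.IH[OF h1] by simp
  also have "\<dots> = fact (Suc i) / pochhammer w (Suc (Suc i))"
  proof -
    have p1: "pochhammer w (Suc (Suc i)) = pochhammer w (Suc i) * (w + of_nat (Suc i))"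
      by (rule pochhammer_Suc)
    have p2: "pochhammer w (Suc (Suc i)) = w * pochhammer (w+1) (Suc i)"
      by (rule pochhammer_rec)
    have nz: "pochhammer w (Suc (Suc i)) \<noteq> 0"
      using Suc.prems by (intro poch_nz) auto
    have a: "pochhammer w (Suc i) \<noteq> 0" "w + of_nat (Suc i) \<noteq> 0" "w \<noteq> 0" "pochhammer (w+1) (Suc i) \<noteq> 0"
      using nz p1 p2 by auto
    have eq: "pochhammer (w+1) (Suc i) = pochhammer w (Suc i) * (w + of_nat (Suc i)) / w"
      using p1 p2 a by (simp add: field_simps)
    have eq2: "pochhammer w (Suc (Suc i)) = pochhammer w (Suc i) * (w + of_nat (Suc i))" by (rule p1)
    show ?thesis unfolding eq eq2 fact_Suc of_nat_mult
      using aux_frac[OF a(1) a(3) a(2), of "fact i"] by (simp add: mult_ac)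
  qed
  finally show ?case .
qed

lemma aux_pf: "(a::complex) \<noteq> 0 \<Longrightarrow> a + 2 \<noteq> 0 \<Longrightarrow> c/(a*(a+2)) = (c/a - c/(a+2))/2"
proof -
  assume a: "a \<noteq> 0" "a + 2 \<noteq> 0"
  have "c/a - c/(a+2) = (c*(a+2) - c*a)/(a*(a+2))" using a by (simp add: diff_frac_eq)
  also have "c*(a+2) - c*a = 2*c" by (simp add: algebra_simps)
  finally show ?thesis by simp
qed

lemma case1_core:
  fixes w :: complex
  assumes h1: "\<And>r. r \<le> i \<Longrightarrow> w + of_nat r \<noteq> 0"
      and h2: "\<And>r. r \<le> i \<Longrightarrow> w + of_nat r - 2 \<noteq> 0"
  shows "pochhammer (w-2) (Suc (Suc i)) * (\<Sum>r\<le>i. (-1)^r * of_nat (i choose r) / ((w + of_nat r - 2) * (w + of_nat r)))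
       = fact (Suc i) * (2*w + of_nat i - 2) / (2*(w + of_nat i))"
proof -
  have h2': "\<And>r. r \<le> i \<Longrightarrow> (w - 2) + of_nat r \<noteq> 0" using h2 by (simp add: algebra_simps)
  have "(\<Sum>r\<le>i. (-1)^r * of_nat (i choose r) / ((w + of_nat r - 2) * (w + of_nat r)))
      = (\<Sum>r\<le>i. ((-1)^r * of_nat (i choose r) / ((w - 2) + of_nat r) - (-1)^r * of_nat (i choose r) / (w + of_nat r)) / 2)"
  proof (rule sum.cong[OF refl])
    fix r assume "r \<in> {..i}"
    hence a: "w + of_nat r \<noteq> 0" "w - 2 + of_nat r \<noteq> 0" using h1 h2' by auto
    have b: "w + of_nat r - 2 = w - 2 + of_nat r" by simp
    show "(-1)^r * of_nat (i choose r) / ((w + of_nat r - 2) * (w + of_nat r))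
       = ((-1)^r * of_nat (i choose r) / ((w - 2) + of_nat r) - (-1)^r * of_nat (i choose r) / (w + of_nat r)) / 2"
      using aux_pf[of "w - 2 + of_nat r" "(-1)^r * of_nat (i choose r)"] a unfolding b by simp
  qed
  also have "\<dots> = ((\<Sum>r\<le>i. (-1)^r * of_nat (i choose r) / ((w - 2) + of_nat r)) - (\<Sum>r\<le>i. (-1)^r * of_nat (i choose r) / (w + of_nat r))) / 2"
    by (simp add: sum_divide_distrib[symmetric] sum_subtractf)
  also have "\<dots> = (fact i / pochhammer (w-2) (Suc i) - fact i / pochhammer w (Suc i)) / 2"
    using alt_recip_sum[OF h1] alt_recip_sum[OF h2'] by simp
  finally have S: "(\<Sum>r\<le>i. (-1)^r * of_nat (i choose r) / ((w + of_nat r - 2) * (w + of_nat r)))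
      = (fact i / pochhammer (w-2) (Suc i) - fact i / pochhammer w (Suc i)) / 2" .
  define P1 where "P1 = pochhammer (w-2) (Suc i)"
  define P0 where "P0 = pochhammer w i"
  have e1: "pochhammer (w-2) (Suc (Suc i)) = P1 * (w + of_nat i - 1)"
    unfolding P1_def by (subst pochhammer_Suc) (simp add: algebra_simps)
  have e2: "pochhammer (w-2) (Suc (Suc i)) = (w-2)*(w-1)*P0"
    unfolding P0_def by (simp add: pochhammer_rec algebra_simps)
  have e3: "pochhammer w (Suc i) = P0 * (w + of_nat i)"
    unfolding P0_def by (simp add: pochhammer_Suc)
  have nP1: "P1 \<noteq> 0" unfolding P1_def using h2' by (intro poch_nz) auto
  have nP0: "P0 \<noteq> 0" unfolding P0_def using h1 by (intro poch_nz) auto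
  have nwi: "w + of_nat i \<noteq> 0" using h1 by auto
  have "pochhammer (w-2) (Suc (Suc i)) * (fact i / pochhammer (w-2) (Suc i) - fact i / pochhammer w (Suc i)) / 2
      = fact i * ((w + of_nat i - 1) - (w-2)*(w-1)/(w + of_nat i)) / 2"
  proof -
    have "pochhammer (w-2) (Suc (Suc i)) * (fact i / pochhammer (w-2) (Suc i))
        = fact i * (w + of_nat i - 1)" unfolding e1 P1_def[symmetric] using nP1 by simp
    moreover have "pochhammer (w-2) (Suc (Suc i)) * (fact i / pochhammer w (Suc i))
        = fact i * ((w-2)*(w-1)/(w + of_nat i))" unfolding e2 e3 using nP0 nwi by simp
    ultimately show ?thesis by (simp add: right_diff_distrib)
  qed
  also have "\<dots> = fact (Suc i) * (2*w + of_nat i - 2) / (2*(w + of_nat i))"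
    using nwi by (simp add: field_simps fact_Suc)
  finally have T: "pochhammer (w-2) (Suc (Suc i)) * (fact i / pochhammer (w-2) (Suc i) - fact i / pochhammer w (Suc i)) / 2
      = fact (Suc i) * (2*w + of_nat i - 2) / (2*(w + of_nat i))" .
  show ?thesis unfolding S using T by (simp only: times_divide_eq_right)
qed

lemma q_closed:
  fixes A :: complex
  shows "(\<Sum>r\<le>Suc n. of_nat (Suc n choose r) * pochhammer (A + of_nat r/2 - of_nat n) n)
         = 2 * pochhammer (2*A - of_nat n) n"
proof (induction n arbitrary: A)
  case 0
  then show ?case by simp
next
  case (Suc n)
  define u where "u = (\<lambda>B r. pochhammer (B + of_nat r/2 - of_nat n) n :: complex)"
  have us: "u A (Suc r) = u (A + 1/2) r" for r
    unfolding u_def by (simp add: add_divide_distrib algebra_simps)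
  have IH1: "(\<Sum>r\<le>Suc n. of_nat (Suc n choose r) * u A r) = 2 * pochhammer (2*A - of_nat n) n"
    unfolding u_def by (rule Suc.IH)
  have IH2: "(\<Sum>r\<le>Suc n. of_nat (Suc n choose r) * u A (Suc r)) = 2 * pochhammer (2*A + 1 - of_nat n) n"
    unfolding us unfolding u_def using Suc.IH[of "A + 1/2"] by (simp add: algebra_simps)
  have tm: "pochhammer (A + of_nat r/2 - of_nat (Suc n)) (Suc n)
      = (A - of_nat n - 1) * u A r + (1/2) * (of_nat r * u A r)" for r
    unfolding u_def by (subst pochhammer_rec) (simp add: algebra_simps)
  have "(\<Sum>r\<le>Suc (Suc n). of_nat (Suc (Suc n) choose r) * pochhammer (A + of_nat r/2 - of_nat (Suc n)) (Suc n))
      = (A - of_nat n - 1) * (\<Sum>r\<le>Suc (Suc n). of_nat (Suc (Suc n) choose r) * u A r)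
        + (1/2) * (\<Sum>r\<le>Suc (Suc n). of_nat (Suc (Suc n) choose r) * of_nat r * u A r)"
  proof -
    have "(\<Sum>r\<le>Suc (Suc n). of_nat (Suc (Suc n) choose r) * pochhammer (A + of_nat r/2 - of_nat (Suc n)) (Suc n))
       = (\<Sum>r\<le>Suc (Suc n). (A - of_nat n - 1) * (of_nat (Suc (Suc n) choose r) * u A r)
             + (1/2) * (of_nat (Suc (Suc n) choose r) * of_nat r * u A r))"
      unfolding tm by (rule sum.cong) (simp_all add: algebra_simps)
    also have "\<dots> = (A - of_nat n - 1) * (\<Sum>r\<le>Suc (Suc n). of_nat (Suc (Suc n) choose r) * u A r)
        + (1/2) * (\<Sum>r\<le>Suc (Suc n). of_nat (Suc (Suc n) choose r) * of_nat r * u A r)"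
      by (simp only: sum.distrib sum_distrib_left)
    finally show ?thesis .
  qed
  also have "(\<Sum>r\<le>Suc (Suc n). of_nat (Suc (Suc n) choose r) * u A r)
      = (\<Sum>r\<le>Suc n. of_nat (Suc n choose r) * u A r) + (\<Sum>r\<le>Suc n. of_nat (Suc n choose r) * u A (Suc r))"
    by (subst pascal_sum) (simp add: sum.distrib algebra_simps)
  also have "(\<Sum>r\<le>Suc (Suc n). of_nat (Suc (Suc n) choose r) * of_nat r * u A r)
      = of_nat (Suc (Suc n)) * (\<Sum>r\<le>Suc n. of_nat (Suc n choose r) * u A (Suc r))"
    by (rule absorb_sum)
  finally have L: "(\<Sum>r\<le>Suc (Suc n). of_nat (Suc (Suc n) choose r) * pochhammer (A + of_nat r/2 - of_nat (Suc n)) (Suc n))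
      = (A - of_nat n - 1) * (2 * pochhammer (2*A - of_nat n) n + 2 * pochhammer (2*A + 1 - of_nat n) n)
        + (1/2) * (of_nat (Suc (Suc n)) * (2 * pochhammer (2*A + 1 - of_nat n) n))"
    unfolding IH1 IH2 .
  define x where "x = 2*A - of_nat n - 1"
  have r1: "pochhammer (2*A - of_nat (Suc n)) (Suc n) = x * pochhammer (2*A - of_nat n) n"
    unfolding x_def by (subst pochhammer_rec) (simp add: algebra_simps)
  have r2: "(x+1) * pochhammer (2*A + 1 - of_nat n) n = pochhammer (2*A - of_nat n) n * (x + 1 + of_nat n)"
  proof -
    have "pochhammer (x+1) (Suc n) = (x+1) * pochhammer (x+2) n" by (subst pochhammer_rec) (simp add: algebra_simps)
    moreover have "pochhammer (x+1) (Suc n) = pochhammer (x+1) n * (x + 1 + of_nat n)" by (rule pochhammer_Suc)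
    moreover have "x + 2 = 2*A + 1 - of_nat n" "x + 1 = 2*A - of_nat n" unfolding x_def by simp_all
    ultimately show ?thesis by simp
  qed
  show ?case unfolding L r1
  proof -
    have e: "of_nat (Suc (Suc n)) = (2*A - of_nat n) - 2*(A - of_nat n - 1)" by simp
    have "(A - of_nat n - 1) * (2 * pochhammer (2*A - of_nat n) n + 2 * pochhammer (2*A + 1 - of_nat n) n)
        + (1/2) * (of_nat (Suc (Suc n)) * (2 * pochhammer (2*A + 1 - of_nat n) n))
        = 2*(A - of_nat n - 1) * pochhammer (2*A - of_nat n) n + (x+1) * pochhammer (2*A + 1 - of_nat n) n"
      unfolding e x_def by (simp add: algebra_simps)
    also have "\<dots> = 2*(A - of_nat n - 1) * pochhammer (2*A - of_nat n) n + pochhammer (2*A - of_nat n) n * (x + 1 + of_nat n)"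
      by (simp only: r2)
    also have "\<dots> = 2 * (x * pochhammer (2*A - of_nat n) n)"
      unfolding x_def by (simp add: algebra_simps)
    finally show "(A - of_nat n - 1) * (2 * pochhammer (2*A - of_nat n) n + 2 * pochhammer (2*A + 1 - of_nat n) n)
        + (1/2) * (of_nat (Suc (Suc n)) * (2 * pochhammer (2*A + 1 - of_nat n) n))
        = 2 * (x * pochhammer (2*A - of_nat n) n)" .
  qed
qed

lemma Gamma_ratio:
  fixes x :: complex
  assumes "x \<notin> \<int>\<^sub>\<le>\<^sub>0" "x + of_nat n \<notin> \<int>\<^sub>\<le>\<^sub>0"
  shows "Gamma x / Gamma (x + of_nat n) = 1 / pochhammer x n" "pochhammer x n \<noteq> 0"
proof -
  have g: "Gamma x \<noteq> 0" "Gamma (x + of_nat n) \<noteq> 0" using assms Gamma_nonzero by auto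
  have p: "pochhammer x n = Gamma (x + of_nat n) / Gamma x" using pochhammer_Gamma[OF assms(1)] .
  show "pochhammer x n \<noteq> 0" using g p by simp
  show "Gamma x / Gamma (x + of_nat n) = 1 / pochhammer x n" using g p by simp
qed

lemma aux_cancel: "(F::complex) \<noteq> 0 \<Longrightarrow> c / F * (F * a / b) = c * a / b" by simp

lemma rhs1:
  fixes \<beta> :: complex and i :: nat
  assumes z1: "\<beta> / 2 \<notin> \<int>\<^sub>\<le>\<^sub>0" and z2: "\<beta> / 2 - of_nat i - 2 \<notin> \<int>\<^sub>\<le>\<^sub>0"
    and hr: "\<forall>r\<le>i. \<beta> / 4 - 1 + (of_nat r - of_nat i) / 2 \<notin> \<int>\<^sub>\<le>\<^sub>0
              \<and> \<beta> / 4 + 1 + (of_nat r - of_nat i) / 2 \<notin> \<int>\<^sub>\<le>\<^sub>0"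
  shows "Gamma (\<beta> / 2) / (fact (i + 1) * Gamma (\<beta> / 2 - of_nat i - 2))
       * (\<Sum>r\<le>i. (-1) ^ r * of_nat (i choose r)
            * Gamma (\<beta> / 4 - 1 + (of_nat r - of_nat i) / 2)
            / Gamma (\<beta> / 4 + 1 + (of_nat r - of_nat i) / 2))
       = 4 * (\<beta> - 2 - of_nat i) / \<beta>"
proof -
  define w where "w = \<beta>/2 - of_nat i"
  have rat: "Gamma (\<beta> / 4 - 1 + (of_nat r - of_nat i) / 2) / Gamma (\<beta> / 4 + 1 + (of_nat r - of_nat i) / 2)
        = 4 / ((w + of_nat r - 2) * (w + of_nat r))
      \<and> w + of_nat r \<noteq> 0 \<and> w + of_nat r - 2 \<noteq> 0" if "r \<le> i" for r
  proof -
    define x where "x = \<beta> / 4 - 1 + (of_nat r - of_nat i) / 2"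
    have e: "\<beta> / 4 + 1 + (of_nat r - of_nat i) / 2 = x + of_nat 2" unfolding x_def by simp
    have x1a: "x \<notin> \<int>\<^sub>\<le>\<^sub>0" using hr that unfolding x_def by auto
    have x1b: "x + of_nat 2 \<notin> \<int>\<^sub>\<le>\<^sub>0" unfolding e[symmetric] using hr that by auto
    note x1 = x1a x1b
    have p2: "pochhammer x 2 = x * (x+1)" by (simp add: numeral_2_eq_2 pochhammer_Suc)
    have nz: "x * (x+1) \<noteq> 0" using Gamma_ratio(2)[OF x1] p2 by simp
    have g1: "Gamma x / Gamma (x + of_nat 2) = 1 / (x * (x+1))"
      using Gamma_ratio(1)[OF x1] p2 by simp
    have xx: "x * (x+1) = (w + of_nat r - 2) * (w + of_nat r) / 4" unfolding x_def w_def by (simp add: field_simps)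
    have g2: "1 / (x * (x+1)) = 4 / ((w + of_nat r - 2) * (w + of_nat r))" unfolding xx by simp
    have "Gamma x / Gamma (x + of_nat 2) = 4 / ((w + of_nat r - 2) * (w + of_nat r))" using g1 g2 by simp
    moreover have "w + of_nat r \<noteq> 0 \<and> w + of_nat r - 2 \<noteq> 0" using nz unfolding xx by auto
    ultimately show ?thesis by (simp only: e x_def[symmetric]) simp
  qed
  have hw1: "\<And>r. r \<le> i \<Longrightarrow> w + of_nat r \<noteq> 0" and hw2: "\<And>r. r \<le> i \<Longrightarrow> w + of_nat r - 2 \<noteq> 0"
    using rat by auto
  have S: "(\<Sum>r\<le>i. (-1) ^ r * of_nat (i choose r)
            * Gamma (\<beta> / 4 - 1 + (of_nat r - of_nat i) / 2)
            / Gamma (\<beta> / 4 + 1 + (of_nat r - of_nat i) / 2))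
        = 4 * (\<Sum>r\<le>i. (-1)^r * of_nat (i choose r) / ((w + of_nat r - 2) * (w + of_nat r)))"
    unfolding sum_distrib_left
  proof (rule sum.cong[OF refl])
    fix r assume "r \<in> {..i}"
    hence R: "Gamma (\<beta> / 4 - 1 + (of_nat r - of_nat i) / 2) / Gamma (\<beta> / 4 + 1 + (of_nat r - of_nat i) / 2)
        = 4 / ((w + of_nat r - 2) * (w + of_nat r))" using rat by auto
    have "(-1) ^ r * of_nat (i choose r) * Gamma (\<beta> / 4 - 1 + (of_nat r - of_nat i) / 2)
            / Gamma (\<beta> / 4 + 1 + (of_nat r - of_nat i) / 2)
       = (-1) ^ r * of_nat (i choose r) * (Gamma (\<beta> / 4 - 1 + (of_nat r - of_nat i) / 2)
            / Gamma (\<beta> / 4 + 1 + (of_nat r - of_nat i) / 2))" by (simp only: times_divide_eq_right)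
    also have "\<dots> = 4 * ((-1)^r * of_nat (i choose r) / ((w + of_nat r - 2) * (w + of_nat r)))"
      unfolding R by simp
    finally show "(-1) ^ r * of_nat (i choose r) * Gamma (\<beta> / 4 - 1 + (of_nat r - of_nat i) / 2)
            / Gamma (\<beta> / 4 + 1 + (of_nat r - of_nat i) / 2)
       = 4 * ((-1)^r * of_nat (i choose r) / ((w + of_nat r - 2) * (w + of_nat r)))" .
  qed
  have wz: "w - 2 = \<beta> / 2 - of_nat i - 2" unfolding w_def by simp
  have wz2: "w - 2 + of_nat (Suc (Suc i)) = \<beta>/2" unfolding w_def by simp
  have G: "Gamma (\<beta> / 2) / Gamma (\<beta> / 2 - of_nat i - 2) = pochhammer (w-2) (Suc (Suc i))"
  proof -
    have "pochhammer (w-2) (Suc (Suc i)) = Gamma (w - 2 + of_nat (Suc (Suc i))) / Gamma (w-2)"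
      by (rule pochhammer_Gamma) (use z2 wz in simp)
    thus ?thesis unfolding wz2 wz by simp
  qed
  note C = case1_core[OF hw1 hw2]
  have nb: "\<beta> \<noteq> 0" using z1 by auto
  have "Gamma (\<beta> / 2) / (fact (i + 1) * Gamma (\<beta> / 2 - of_nat i - 2))
       * (4 * (\<Sum>r\<le>i. (-1)^r * of_nat (i choose r) / ((w + of_nat r - 2) * (w + of_nat r))))
      = 4 / fact (Suc i) * (pochhammer (w-2) (Suc (Suc i)) * (\<Sum>r\<le>i. (-1)^r * of_nat (i choose r) / ((w + of_nat r - 2) * (w + of_nat r))))"
  proof -
    have "Gamma (\<beta> / 2) / (fact (i + 1) * Gamma (\<beta> / 2 - of_nat i - 2))
        = pochhammer (w-2) (Suc (Suc i)) / fact (Suc i)"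
      by (metis G Suc_eq_plus1 divide_divide_eq_left mult.commute)
    thus ?thesis by simp
  qed
  also have "\<dots> = 4 / fact (Suc i) * (fact (Suc i) * (2*w + of_nat i - 2) / (2*(w + of_nat i)))" by (simp only: C)
  also have "\<dots> = 4 * (2*w + of_nat i - 2) / (2*(w + of_nat i))"
    by (rule aux_cancel) (rule fact_nonzero)
  also have "\<dots> = 4 * (\<beta> - 2 - of_nat i) / \<beta>" unfolding w_def using nb by (simp add: field_simps)
  finally show ?thesis unfolding S .
qed



lemma Gamma_ratio':
  fixes x :: complex
  assumes "x \<notin> \<int>\<^sub>\<le>\<^sub>0"
  shows "Gamma (x + of_nat n) / Gamma x = pochhammer x n"
  using pochhammer_Gamma[OF assms] by simp

lemma rhs2:
  fixes \<beta> :: complex and i :: nat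
  assumes z1: "\<beta> / 2 \<notin> \<int>\<^sub>\<le>\<^sub>0" and z2: "\<beta> / 2 + of_nat i - 2 \<notin> \<int>\<^sub>\<le>\<^sub>0"
    and hr: "\<forall>r\<le>i. \<beta> / 4 - 1 + (of_nat r + of_nat i) / 2 \<notin> \<int>\<^sub>\<le>\<^sub>0
              \<and> \<beta> / 4 + 1 + (of_nat r - of_nat i) / 2 \<notin> \<int>\<^sub>\<le>\<^sub>0"
  shows "Gamma (\<beta> / 2) / Gamma (\<beta> / 2 + of_nat i - 2)
       * (\<Sum>r\<le>i. of_nat (i choose r)
            * Gamma (\<beta> / 4 - 1 + (of_nat r + of_nat i) / 2)
            / Gamma (\<beta> / 4 + 1 + (of_nat r - of_nat i) / 2))
       = 4 * (\<beta> - 2 + of_nat i) / \<beta>"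
proof -
  define z where "z = \<beta> / 2"
  have nz: "z \<noteq> 0" using z1 unfolding z_def by auto
  have bz: "\<beta> = 2 * z" unfolding z_def by simp
  show ?thesis
  proof (cases i)
    case 0
    define x where "x = \<beta> / 4 - 1"
    have x1: "x \<notin> \<int>\<^sub>\<le>\<^sub>0" using hr unfolding 0 x_def by auto
    have ex: "\<beta> / 4 + 1 = x + of_nat 2" unfolding x_def by simp
    have x2: "x + of_nat 2 \<notin> \<int>\<^sub>\<le>\<^sub>0" using hr unfolding 0 ex[symmetric] by auto
    have p2: "pochhammer x 2 = x * (x+1)" by (simp add: numeral_2_eq_2 pochhammer_Suc)
    have R: "Gamma x / Gamma (x + of_nat 2) = 1 / (x * (x+1))" "x * (x+1) \<noteq> 0"
      using Gamma_ratio[OF x1 x2] p2 by simp_all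
    have ez: "z - 2 + of_nat 2 = z" by simp
    have zz: "z - 2 \<notin> \<int>\<^sub>\<le>\<^sub>0" using z2 unfolding 0 z_def by simp
    have P: "Gamma z / Gamma (z - 2) = (z - 2) * (z - 1)"
      using Gamma_ratio'[OF zz, of 2] unfolding ez by (simp add: numeral_2_eq_2 pochhammer_Suc algebra_simps)
    have xz: "x = (z - 2) / 2" "x + 1 = z / 2" unfolding x_def z_def by simp_all
    have "Gamma (\<beta> / 2) / Gamma (\<beta> / 2 + of_nat i - 2)
       * (\<Sum>r\<le>i. of_nat (i choose r)
            * Gamma (\<beta> / 4 - 1 + (of_nat r + of_nat i) / 2)
            / Gamma (\<beta> / 4 + 1 + (of_nat r - of_nat i) / 2))
       = Gamma z / Gamma (z - 2) * (Gamma x / Gamma (x + of_nat 2))"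
      unfolding 0 z_def x_def by (simp add: add.commute)
    also have "\<dots> = (z - 2) * (z - 1) * (1 / (x * (x+1)))" unfolding P R(1) ..
    also have "x * (x+1) = (z-2) * z / 4" unfolding x_def z_def by (simp add: field_simps)
    finally have L: "Gamma (\<beta> / 2) / Gamma (\<beta> / 2 + of_nat i - 2)
       * (\<Sum>r\<le>i. of_nat (i choose r)
            * Gamma (\<beta> / 4 - 1 + (of_nat r + of_nat i) / 2)
            / Gamma (\<beta> / 4 + 1 + (of_nat r - of_nat i) / 2))
       = (z - 2) * (z - 1) * (1 / ((z-2) * z / 4))" .
    have "z - 2 \<noteq> 0" using R(2) \<open>x * (x+1) = (z-2) * z / 4\<close> by auto
    then show ?thesis unfolding L unfolding 0 bz using nz by (simp add: field_simps)
  next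
    case (Suc j)
    show ?thesis
    proof (cases j)
      case 0
      with Suc have i1: "i = 1" by simp
      define x0 where "x0 = \<beta> / 4 - 1/2"
      define x1 where "x1 = \<beta> / 4"
      have a0: "x0 \<notin> \<int>\<^sub>\<le>\<^sub>0" "x0 + of_nat 1 \<notin> \<int>\<^sub>\<le>\<^sub>0"
        using hr unfolding i1 x0_def by (auto dest: spec[of _ 0])
      have a1: "x1 \<notin> \<int>\<^sub>\<le>\<^sub>0" "x1 + of_nat 1 \<notin> \<int>\<^sub>\<le>\<^sub>0"
        using hr unfolding i1 x1_def by (auto dest: spec[of _ 1])
      have R0: "Gamma x0 / Gamma (x0 + 1) = 1 / x0" using Gamma_ratio(1)[OF a0] by simp
      have R1: "Gamma x1 / Gamma (x1 + 1) = 1 / x1" using Gamma_ratio(1)[OF a1] by simp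
      have n0: "x0 \<noteq> 0" using Gamma_ratio(2)[OF a0] by simp
      have n1: "x1 \<noteq> 0" using Gamma_ratio(2)[OF a1] by simp
      have zz: "z - 1 \<notin> \<int>\<^sub>\<le>\<^sub>0" using z2 unfolding i1 z_def by simp
      have P: "Gamma z / Gamma (z - 1) = z - 1"
        using Gamma_ratio'[OF zz, of 1] by simp
      have sum1: "(\<Sum>r\<le>(1::nat). g r) = g 0 + g 1" for g :: "nat \<Rightarrow> complex"
        by (simp add: atMost_Suc)
      have e00: "\<beta> / 4 - 1 + (of_nat (0::nat) + of_nat (1::nat)) / 2 = x0" unfolding x0_def by simp
      have e01: "\<beta> / 4 + 1 + (of_nat (0::nat) - of_nat (1::nat)) / 2 = x0 + 1" unfolding x0_def by simp
      have e10: "\<beta> / 4 - 1 + (of_nat (1::nat) + of_nat (1::nat)) / 2 = x1" unfolding x1_def by simp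
      have e11: "\<beta> / 4 + 1 + (of_nat (1::nat) - of_nat (1::nat)) / 2 = x1 + 1" unfolding x1_def by simp
      have ez: "z + of_nat (1::nat) - 2 = z - 1" by simp
      have "Gamma (\<beta> / 2) / Gamma (\<beta> / 2 + of_nat i - 2)
         * (\<Sum>r\<le>i. of_nat (i choose r)
              * Gamma (\<beta> / 4 - 1 + (of_nat r + of_nat i) / 2)
              / Gamma (\<beta> / 4 + 1 + (of_nat r - of_nat i) / 2))
         = Gamma z / Gamma (z - 1) * (of_nat (1 choose 0) * Gamma x0 / Gamma (x0 + 1) + of_nat (1 choose 1) * Gamma x1 / Gamma (x1 + 1))"
        unfolding i1 sum1 e00 e01 e10 e11 z_def[symmetric] ez ..
      also have "\<dots> = Gamma z / Gamma (z - 1) * (Gamma x0 / Gamma (x0 + 1) + Gamma x1 / Gamma (x1 + 1))"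
        by simp
      also have "\<dots> = (z - 1) * (1 / x0 + 1 / x1)" unfolding P R0 R1 ..
      finally have L: "Gamma (\<beta> / 2) / Gamma (\<beta> / 2 + of_nat i - 2)
         * (\<Sum>r\<le>i. of_nat (i choose r)
              * Gamma (\<beta> / 4 - 1 + (of_nat r + of_nat i) / 2)
              / Gamma (\<beta> / 4 + 1 + (of_nat r - of_nat i) / 2))
         = (z - 1) * (1 / x0 + 1 / x1)" .
      have xz: "x0 = (z - 1) / 2" "x1 = z / 2" unfolding x0_def x1_def z_def by (simp_all add: field_simps)
      have "z - 1 \<noteq> 0" using n0 unfolding xz by simp
      then show ?thesis unfolding L unfolding xz i1 bz using nz by (simp add: field_simps)
    next
      case (Suc n)
      with \<open>i = Suc j\<close> have iS: "i = Suc (Suc n)" by simp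
      define A where "A = \<beta> / 4 + of_nat n / 2"
      have dr: "\<beta> / 4 + 1 + (of_nat r - of_nat i) / 2 = A + of_nat r / 2 - of_nat n" for r
        unfolding A_def iS by (simp add: field_simps)
      have ar: "\<beta> / 4 - 1 + (of_nat r + of_nat i) / 2 = (A + of_nat r / 2 - of_nat n) + of_nat n" for r
        unfolding A_def iS by (simp add: field_simps)
      have S: "(\<Sum>r\<le>i. of_nat (i choose r)
              * Gamma (\<beta> / 4 - 1 + (of_nat r + of_nat i) / 2)
              / Gamma (\<beta> / 4 + 1 + (of_nat r - of_nat i) / 2))
            = (\<Sum>r\<le>Suc (Suc n). of_nat (Suc (Suc n) choose r) * pochhammer (A + of_nat r / 2 - of_nat n) n)"
        unfolding iS
      proof (rule sum.cong[OF refl])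
        fix r assume r: "r \<in> {..Suc (Suc n)}"
        have "\<beta> / 4 + 1 + (of_nat r - of_nat i) / 2 \<notin> \<int>\<^sub>\<le>\<^sub>0" using hr r iS by auto
        hence "A + of_nat r / 2 - of_nat n \<notin> \<int>\<^sub>\<le>\<^sub>0" unfolding dr .
        hence G: "Gamma ((A + of_nat r / 2 - of_nat n) + of_nat n) / Gamma (A + of_nat r / 2 - of_nat n)
              = pochhammer (A + of_nat r / 2 - of_nat n) n" by (rule Gamma_ratio')
        show "of_nat (Suc (Suc n) choose r)
              * Gamma (\<beta> / 4 - 1 + (of_nat r + of_nat (Suc (Suc n))) / 2)
              / Gamma (\<beta> / 4 + 1 + (of_nat r - of_nat (Suc (Suc n))) / 2)
            = of_nat (Suc (Suc n) choose r) * pochhammer (A + of_nat r / 2 - of_nat n) n"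
          using G dr[of r] ar[of r] unfolding iS by (simp only: times_divide_eq_right[symmetric])
      qed
      also have "\<dots> = (\<Sum>r\<le>Suc n. of_nat (Suc n choose r) * pochhammer (A + of_nat r / 2 - of_nat n) n)
          + (\<Sum>r\<le>Suc n. of_nat (Suc n choose r) * pochhammer ((A + 1/2) + of_nat r / 2 - of_nat n) n)"
        by (subst pascal_sum) (simp add: sum.distrib algebra_simps add_divide_distrib)
      also have "\<dots> = 2 * pochhammer (2*A - of_nat n) n + 2 * pochhammer (2*(A + 1/2) - of_nat n) n"
        unfolding q_closed ..
      also have e1: "2*A - of_nat n = z" unfolding A_def z_def by (simp add: field_simps)
      also have e2: "2*(A + 1/2) - of_nat n = z + 1" unfolding A_def z_def by (simp add: field_simps)
      finally have S': "(\<Sum>r\<le>i. of_nat (i choose r)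
              * Gamma (\<beta> / 4 - 1 + (of_nat r + of_nat i) / 2)
              / Gamma (\<beta> / 4 + 1 + (of_nat r - of_nat i) / 2))
            = 2 * pochhammer z n + 2 * pochhammer (z + 1) n" .
      have zn: "z + of_nat n \<notin> \<int>\<^sub>\<le>\<^sub>0" using z2 unfolding iS z_def by (simp add: algebra_simps)
      have z1': "z \<notin> \<int>\<^sub>\<le>\<^sub>0" using z1 unfolding z_def .
      have P: "Gamma (\<beta> / 2) / Gamma (\<beta> / 2 + of_nat i - 2) = 1 / pochhammer z n"
        using Gamma_ratio(1)[OF z1' zn] unfolding iS z_def by (simp add: algebra_simps)
      have pnz: "pochhammer z n \<noteq> 0" using Gamma_ratio(2)[OF z1' zn] .
      have rec: "z * pochhammer (z + 1) n = pochhammer z n * (z + of_nat n)"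
        using pochhammer_rec[of z n] pochhammer_Suc[of z n] by simp
      have "1 / pochhammer z n * (2 * pochhammer z n + 2 * pochhammer (z + 1) n)
          = 2 + 2 * (z + of_nat n) / z"
      proof -
        have eq: "pochhammer (z + 1) n = pochhammer z n * (z + of_nat n) / z" using rec nz by (simp add: field_simps)
        have "2 * pochhammer z n + 2 * pochhammer (z + 1) n = pochhammer z n * (2 + 2 * (z + of_nat n) / z)"
          unfolding eq using nz by (simp add: field_simps)
        thus ?thesis using pnz by simp
      qed
      also have "\<dots> = 4 * (\<beta> - 2 + of_nat i) / \<beta>" unfolding bz iS using nz by (simp add: field_simps)
      finally show ?thesis unfolding P S' .
    qed
  qed
qed



lemma kdf_term_eq:
  "kdf_term [\<alpha>] [b] [c, \<alpha>/2+1] [\<beta>] [] [\<alpha>/2] x y (m, n)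
   = pochhammer \<alpha> (m+n) * pochhammer b m * (pochhammer c n * pochhammer (\<alpha>/2+1) n)
     / (pochhammer \<beta> (m+n) * pochhammer (\<alpha>/2) n) * (x^m / fact m) * (y^n / fact n)"
  unfolding kdf_term_def by simp

lemma poch_shift_ratio:
  fixes a :: complex
  assumes "a \<noteq> 0"
  shows "pochhammer (a+1) n = pochhammer a n * (1 + of_nat n / a)"
proof -
  have "a * pochhammer (a+1) n = pochhammer a n * (a + of_nat n)"
    using pochhammer_rec[of a n] pochhammer_Suc[of a n] by simp
  thus ?thesis using assms by (simp add: field_simps)
qed

lemma weighted_vandermonde:
  fixes b c :: complex
  shows "(\<Sum>m\<le>N. of_nat (N choose m) * of_nat (N - m) * pochhammer b m * pochhammer c (N - m))
       = of_nat N * c * pochhammer (b + c + 1) (N - 1)"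
proof (cases N)
  case 0
  then show ?thesis by simp
next
  case (Suc M)
  have "(\<Sum>m\<le>N. of_nat (N choose m) * of_nat (N - m) * pochhammer b m * pochhammer c (N - m))
      = (\<Sum>m\<le>M. of_nat (N choose m) * of_nat (N - m) * pochhammer b m * pochhammer c (N - m))"
    unfolding Suc by simp
  also have "\<dots> = (\<Sum>m\<le>M. of_nat N * c * (of_nat (M choose m) * pochhammer b m * pochhammer (c+1) (M - m)))"
  proof (rule sum.cong[OF refl])
    fix m assume "m \<in> {..M}"
    hence m: "m \<le> M" by simp
    have a: "(N - m) * (N choose m) = N * (M choose m)"
      using binomial_absorb_comp[of N m] unfolding Suc by simp
    have b: "pochhammer c (N - m) = c * pochhammer (c+1) (M - m)"
      using m unfolding Suc by (simp add: Suc_diff_le pochhammer_rec)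
    have a': "of_nat (N choose m) * of_nat (N - m) = (of_nat N * of_nat (M choose m) :: complex)"
      using a by (metis of_nat_mult mult.commute)
    show "of_nat (N choose m) * of_nat (N - m) * pochhammer b m * pochhammer c (N - m)
        = of_nat N * c * (of_nat (M choose m) * pochhammer b m * pochhammer (c+1) (M - m))"
    proof -
      have "of_nat (N choose m) * of_nat (N - m) * pochhammer b m * pochhammer c (N - m)
          = (of_nat (N choose m) * of_nat (N - m)) * (pochhammer b m * (c * pochhammer (c+1) (M - m)))"
        unfolding b by (simp only: mult.assoc)
      also have "\<dots> = (of_nat N * of_nat (M choose m)) * (pochhammer b m * (c * pochhammer (c+1) (M - m)))"
        unfolding a' ..
      finally show ?thesis by (simp add: mult_ac)
    qed
  qed
  also have "\<dots> = of_nat N * c * pochhammer (b + (c + 1)) M"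
    by (simp add: sum_distrib_left[symmetric] pochhammer_binomial_sum)
  finally show ?thesis unfolding Suc by (simp add: add.assoc)
qed

lemma diag_term:
  fixes \<alpha> \<beta> b c :: complex
  assumes a0: "\<alpha> \<noteq> 0" and pa: "\<And>n. pochhammer (\<alpha>/2) n \<noteq> 0" and pb: "\<And>n. pochhammer \<beta> n \<noteq> 0"
    and m: "m \<le> N"
  shows "kdf_term [\<alpha>] [b] [c, \<alpha>/2+1] [\<beta>] [] [\<alpha>/2] (-1) (-1) (m, N - m)
     = pochhammer \<alpha> N / pochhammer \<beta> N * (-1)^N / fact N *
       (of_nat (N choose m) * pochhammer b m * pochhammer c (N - m)
        + (2/\<alpha>) * (of_nat (N choose m) * of_nat (N - m) * pochhammer b m * pochhammer c (N - m)))"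
proof -
  define n where "n = N - m"
  have mn: "m + n = N" unfolding n_def using m by simp
  have r1: "pochhammer (\<alpha>/2+1) n = pochhammer (\<alpha>/2) n * (1 + 2 * of_nat n / \<alpha>)"
    using poch_shift_ratio[of "\<alpha>/2" n] a0 by simp
  have r2: "(-1::complex)^m * (-1)^n = (-1)^N" unfolding mn[symmetric] by (simp add: power_add)
  have r3: "(of_nat (N choose m) :: complex) = fact N / (fact m * fact n)"
    unfolding n_def by (rule binomial_fact[OF m])
  have fnz: "(fact m :: complex) \<noteq> 0" "(fact n :: complex) \<noteq> 0" "(fact N :: complex) \<noteq> 0" by simp_all
  have "kdf_term [\<alpha>] [b] [c, \<alpha>/2+1] [\<beta>] [] [\<alpha>/2] (-1) (-1) (m, n)
      = pochhammer \<alpha> N * pochhammer b m * (pochhammer c n * (pochhammer (\<alpha>/2) n * (1 + 2 * of_nat n / \<alpha>)))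
     / (pochhammer \<beta> N * pochhammer (\<alpha>/2) n) * ((-1)^m / fact m) * ((-1)^n / fact n)"
    unfolding kdf_term_eq mn r1 ..
  also have "\<dots> = pochhammer \<alpha> N / pochhammer \<beta> N * ((-1)^m * (-1)^n) / (fact m * fact n) *
       (pochhammer b m * pochhammer c n * (1 + 2 * of_nat n / \<alpha>))"
    using pa[of n] pb[of N] fnz by (simp add: field_simps)
  also have "\<dots> = pochhammer \<alpha> N / pochhammer \<beta> N * (-1)^N / fact N *
       (fact N / (fact m * fact n) * pochhammer b m * pochhammer c n * (1 + 2 * of_nat n / \<alpha>))"
    unfolding r2 using fnz a0 pb[of N] by (simp add: field_simps)
  also have "\<dots> = pochhammer \<alpha> N / pochhammer \<beta> N * (-1)^N / fact N *
       (of_nat (N choose m) * pochhammer b m * pochhammer c n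
        + (2/\<alpha>) * (of_nat (N choose m) * of_nat n * pochhammer b m * pochhammer c n))"
    unfolding r3[symmetric] by (simp add: algebra_simps)
  finally show ?thesis unfolding n_def .
qed

lemma diag_sum:
  fixes \<alpha> \<beta> b c :: complex
  assumes a0: "\<alpha> \<noteq> 0" and pa: "\<And>n. pochhammer (\<alpha>/2) n \<noteq> 0" and pb: "\<And>n. pochhammer \<beta> n \<noteq> 0"
    and bc: "b + c = \<beta>" and b0: "\<beta> \<noteq> 0"
  shows "(\<Sum>m\<le>N. kdf_term [\<alpha>] [b] [c, \<alpha>/2+1] [\<beta>] [] [\<alpha>/2] (-1) (-1) (m, N - m))
     = pochhammer \<alpha> N * (-1)^N / fact N * (1 + 2*c/(\<alpha>*\<beta>) * of_nat N)"
proof -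
  define C0 where "C0 = pochhammer \<alpha> N / pochhammer \<beta> N * (-1)^N / fact N"
  have "(\<Sum>m\<le>N. kdf_term [\<alpha>] [b] [c, \<alpha>/2+1] [\<beta>] [] [\<alpha>/2] (-1) (-1) (m, N - m))
      = (\<Sum>m\<le>N. C0 * (of_nat (N choose m) * pochhammer b m * pochhammer c (N - m)
        + (2/\<alpha>) * (of_nat (N choose m) * of_nat (N - m) * pochhammer b m * pochhammer c (N - m))))"
    unfolding C0_def by (rule sum.cong[OF refl]) (rule diag_term[OF a0 pa pb], simp)
  also have "\<dots> = C0 * ((\<Sum>m\<le>N. of_nat (N choose m) * pochhammer b m * pochhammer c (N - m))
        + (2/\<alpha>) * (\<Sum>m\<le>N. of_nat (N choose m) * of_nat (N - m) * pochhammer b m * pochhammer c (N - m)))"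
    by (simp only: distrib_left sum.distrib sum_distrib_left)
  also have "\<dots> = C0 * (pochhammer \<beta> N + (2/\<alpha>) * (of_nat N * c * pochhammer (\<beta> + 1) (N - 1)))"
    unfolding weighted_vandermonde pochhammer_binomial_sum[symmetric] bc ..
  also have "pochhammer \<beta> N + (2/\<alpha>) * (of_nat N * c * pochhammer (\<beta> + 1) (N - 1))
      = pochhammer \<beta> N * (1 + 2*c/(\<alpha>*\<beta>) * of_nat N)"
  proof (cases N)
    case 0 then show ?thesis by simp
  next
    case (Suc M)
    have "pochhammer \<beta> N = \<beta> * pochhammer (\<beta>+1) M" unfolding Suc by (rule pochhammer_rec)
    then show ?thesis unfolding Suc using a0 b0 by (simp add: field_simps)
  qed
  also have "C0 * (pochhammer \<beta> N * (1 + 2*c/(\<alpha>*\<beta>) * of_nat N))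
     = pochhammer \<alpha> N * (-1)^N / fact N * (1 + 2*c/(\<alpha>*\<beta>) * of_nat N)"
    unfolding C0_def using pb[of N] by simp
  finally show ?thesis .
qed



lemma diag_has_sum:
  fixes t :: "nat \<times> nat \<Rightarrow> complex"
  assumes "(t has_sum S) UNIV"
  shows "((\<lambda>N. \<Sum>m\<le>N. t (m, N - m)) has_sum S) UNIV"
proof -
  define h where "h = (\<lambda>(N::nat, m::nat). (m, N - m))"
  have bij: "bij_betw h (SIGMA N:UNIV. {..N}) UNIV"
  proof (rule bij_betw_byWitness[where f' = "\<lambda>(m::nat, n::nat). (m + n, m)"])
    show "\<forall>a\<in>(SIGMA N:UNIV. {..N}). (\<lambda>(m::nat, n::nat). (m + n, m)) (h a) = a" unfolding h_def by auto
    show "\<forall>a'\<in>UNIV. h ((\<lambda>(m::nat, n::nat). (m + n, m)) a') = a'" unfolding h_def by auto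
    show "h ` (SIGMA N:UNIV. {..N}) \<subseteq> UNIV" by simp
    show "(\<lambda>(m::nat, n::nat). (m + n, m)) ` UNIV \<subseteq> (SIGMA N:UNIV. {..N})" by (auto intro: le_add1)
  qed
  have "((\<lambda>x. t (h x)) has_sum S) (SIGMA N:UNIV. {..N})"
    unfolding has_sum_reindex_bij_betw[OF bij] by (rule assms)
  then show ?thesis
    by (rule has_sum_SigmaD) (auto simp: h_def intro!: has_sum_finiteI)
qed

lemma abel_abs:
  fixes d :: "nat \<Rightarrow> complex" and G :: "real \<Rightarrow> complex"
  assumes sm: "summable (\<lambda>N. norm (d N))"
    and eq: "\<And>x. x \<in> {0<..<1} \<Longrightarrow> (\<lambda>N. d N * of_real x ^ N) sums G x"
    and lim: "(G \<longlongrightarrow> L) (at_left 1)"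
  shows "suminf d = L"
proof -
  define F where "F = (\<lambda>x::real. suminf (\<lambda>N. d N * of_real x ^ N))"
  have ul: "uniform_limit {0..1} (\<lambda>n x. \<Sum>i<n. d i * of_real x ^ i) F sequentially"
    unfolding F_def
  proof (rule Weierstrass_m_test[OF _ sm])
    fix n and x :: real assume x: "x \<in> {0..1}"
    have "norm (d n * of_real x ^ n) = norm (d n) * \<bar>x\<bar> ^ n" by (simp add: norm_mult norm_power)
    also have "\<dots> \<le> norm (d n) * 1"
      using x by (intro mult_left_mono power_le_one) auto
    finally show "norm (d n * of_real x ^ n) \<le> norm (d n)" by simp
  qed
  have cont: "continuous_on {0..1} F"
    by (rule uniform_limit_theorem[OF _ ul]) (auto intro!: always_eventually continuous_intros)
  hence "(F \<longlongrightarrow> F 1) (at 1 within {0..1})" by (simp add: continuous_on_def)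
  hence F1: "(F \<longlongrightarrow> F 1) (at_left 1)" by (simp add: at_within_Icc_at_left)
  have "eventually (\<lambda>x. x \<in> {0<..<(1::real)}) (at_left 1)" by (rule eventually_at_left_real) simp
  hence ev: "eventually (\<lambda>x. G x = F x) (at_left 1)"
  proof eventually_elim
    case (elim x)
    show ?case unfolding F_def using sums_unique[OF eq[OF elim]] .
  qed
  have "(F \<longlongrightarrow> L) (at_left 1)" by (rule Lim_transform_eventually[OF lim ev])
  hence "F 1 = L" using F1 by (intro tendsto_unique[of "at_left (1::real)"]) auto
  thus ?thesis unfolding F_def by simp
qed

lemma binom_series:
  fixes \<alpha> K :: complex and x :: real
  assumes x: "\<bar>x\<bar> < 1"
  shows "(\<lambda>N. pochhammer \<alpha> N * (-1)^N / fact N * (1 + K * of_nat N) * of_real x ^ N) sums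
           ((1 + of_real x) powr (-\<alpha>) + K * ((-\<alpha>) * of_real x * (1 + of_real x) powr (-\<alpha> - 1)))"
proof -
  define a where "a = -\<alpha>"
  define z where "z = (of_real x :: complex)"
  have nz: "norm z < 1" unfolding z_def using x by simp
  define g where "g = (\<lambda>N. (a gchoose N) * z ^ N)"
  have s1: "g sums (1 + z) powr a" unfolding g_def by (rule gen_binomial_complex[OF nz])
  have "(\<lambda>k. a * z * (((a - 1) gchoose k) * z ^ k)) sums (a * z * (1 + z) powr (a - 1))"
    by (rule sums_mult[OF gen_binomial_complex[OF nz]])
  moreover have "a * z * (((a - 1) gchoose k) * z ^ k) = of_nat (Suc k) * g (Suc k)" for k
    unfolding g_def using gbinomial_absorption[of k a] by (simp add: algebra_simps)
  ultimately have "(\<lambda>k. of_nat (Suc k) * g (Suc k)) sums (a * z * (1 + z) powr (a - 1))" by simp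
  hence s2: "(\<lambda>N. of_nat N * g N) sums (a * z * (1 + z) powr (a - 1))"
    using sums_Suc_iff[of "\<lambda>N. of_nat N * g N"] by simp
  have "(\<lambda>N. g N + K * (of_nat N * g N)) sums ((1 + z) powr a + K * (a * z * (1 + z) powr (a - 1)))"
    by (intro sums_add s1 sums_mult s2)
  moreover have "g N + K * (of_nat N * g N) = pochhammer \<alpha> N * (-1)^N / fact N * (1 + K * of_nat N) * of_real x ^ N" for N
    unfolding g_def a_def z_def gbinomial_pochhammer by (simp add: field_simps)
  ultimately show ?thesis unfolding a_def z_def by simp
qed



lemma nonpos_poch_nz:
  fixes a :: complex
  assumes "a \<notin> \<int>\<^sub>\<le>\<^sub>0"
  shows "pochhammer a n \<noteq> 0"
proof
  assume "pochhammer a n = 0"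
  then obtain k where "a = - of_nat k" by (auto simp: pochhammer_eq_0_iff)
  with assms show False by simp
qed

lemma lhs_value:
  fixes \<alpha> \<beta> b c :: complex
  assumes hb: "\<beta> \<notin> \<int>\<^sub>\<le>\<^sub>0" and ha: "\<alpha> / 2 \<notin> \<int>\<^sub>\<le>\<^sub>0" and bc: "b + c = \<beta>"
    and conv: "kdf_converges [\<alpha>] [b] [c, \<alpha>/2+1] [\<beta>] [] [\<alpha>/2] (-1) (-1)"
  shows "KdF [\<alpha>] [b] [c, \<alpha>/2+1] [\<beta>] [] [\<alpha>/2] (-1) (-1) = 2 powr (-\<alpha>) * b / \<beta>"
proof -
  define S where "S = KdF [\<alpha>] [b] [c, \<alpha>/2+1] [\<beta>] [] [\<alpha>/2] (-1) (-1)"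
  define K where "K = 2*c/(\<alpha>*\<beta>)"
  define d where "d = (\<lambda>N. pochhammer \<alpha> N * (-1)^N / fact N * (1 + K * of_nat N))"
  have a0: "\<alpha> \<noteq> 0" using ha by auto
  have b0: "\<beta> \<noteq> 0" using hb by auto
  have pa: "\<And>n. pochhammer (\<alpha>/2) n \<noteq> 0" using ha by (rule nonpos_poch_nz)
  have pb: "\<And>n. pochhammer \<beta> n \<noteq> 0" using hb by (rule nonpos_poch_nz)
  have hs: "(kdf_term [\<alpha>] [b] [c, \<alpha>/2+1] [\<beta>] [] [\<alpha>/2] (-1) (-1) has_sum S) UNIV"
    using conv unfolding kdf_converges_def S_def KdF_def by (rule has_sum_infsum)
  have "((\<lambda>N. \<Sum>m\<le>N. kdf_term [\<alpha>] [b] [c, \<alpha>/2+1] [\<beta>] [] [\<alpha>/2] (-1) (-1) (m, N - m)) has_sum S) UNIV"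
    by (rule diag_has_sum[OF hs])
  hence ds: "(d has_sum S) UNIV" unfolding diag_sum[OF a0 pa pb bc b0] d_def K_def .
  hence "d summable_on UNIV" by (rule has_sum_imp_summable)
  hence "(\<lambda>N. norm (d N)) summable_on UNIV" by (simp add: summable_on_iff_abs_summable_on_complex)
  hence sm: "summable (\<lambda>N. norm (d N))" by (simp add: summable_on_UNIV_nonneg_real_iff)
  have sumS: "suminf d = S" using has_sum_imp_sums[OF ds] by (simp add: sums_iff)
  define G where "G = (\<lambda>x::real. (1 + of_real x) powr (-\<alpha>) + K * ((-\<alpha>) * of_real x * (1 + of_real x) powr (-\<alpha> - 1)))"
  have eq: "(\<lambda>N. d N * of_real x ^ N) sums G x" if "x \<in> {0<..<1}" for x
    unfolding d_def G_def using that by (intro binom_series) auto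
  have lim: "(G \<longlongrightarrow> G 1) (at_left 1)"
    unfolding G_def by (intro tendsto_intros) (auto simp: complex_nonpos_Reals_iff)
  have "suminf d = G 1" by (rule abel_abs[OF sm eq lim])
  hence SG: "S = G 1" using sumS by simp
  have p2: "(2::complex) powr (-\<alpha> - 1) = 2 powr (-\<alpha>) / 2"
    using powr_diff[of 2 "-\<alpha>" 1] powr_nat'[of 2 1] by simp
  have "G 1 = 2 powr (-\<alpha>) * (1 - c / \<beta>)"
    unfolding G_def K_def using a0 b0 by (simp add: p2 field_simps)
  also have "\<dots> = 2 powr (-\<alpha>) * b / \<beta>"
  proof -
    have bb: "b = \<beta> - c" using bc by (simp add: algebra_simps)
    show ?thesis unfolding bb using b0 by (simp add: field_simps)
  qed
  finally show ?thesis using SG unfolding S_def by simp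
qed



theorem theorem3:
  fixes i :: nat and \<alpha> \<beta> :: complex
  assumes "\<beta> \<notin> \<int>\<^sub>\<le>\<^sub>0" and "\<alpha> / 2 \<notin> \<int>\<^sub>\<le>\<^sub>0"
  shows
   "(kdf_converges [\<alpha>] [\<beta> - 2 - of_nat i] [2 + of_nat i, \<alpha> / 2 + 1]
                  [\<beta>] [] [\<alpha> / 2] (-1) (-1)
     \<and> \<beta> / 2 \<notin> \<int>\<^sub>\<le>\<^sub>0 \<and> \<beta> / 2 - of_nat i - 2 \<notin> \<int>\<^sub>\<le>\<^sub>0
     \<and> (\<forall>r\<le>i. \<beta> / 4 - 1 + (of_nat r - of_nat i) / 2 \<notin> \<int>\<^sub>\<le>\<^sub>0
              \<and> \<beta> / 4 + 1 + (of_nat r - of_nat i) / 2 \<notin> \<int>\<^sub>\<le>\<^sub>0)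
     \<longrightarrow>
     KdF [\<alpha>] [\<beta> - 2 - of_nat i] [2 + of_nat i, \<alpha> / 2 + 1]
         [\<beta>] [] [\<alpha> / 2] (-1) (-1)
     = (2 powr (-2 - \<alpha>) * Gamma (\<beta> / 2))
         / (fact (i + 1) * Gamma (\<beta> / 2 - of_nat i - 2))
       * (\<Sum>r\<le>i. (-1) ^ r * of_nat (i choose r)
            * Gamma (\<beta> / 4 - 1 + (of_nat r - of_nat i) / 2)
            / Gamma (\<beta> / 4 + 1 + (of_nat r - of_nat i) / 2)))
    \<and>
    (kdf_converges [\<alpha>] [\<beta> - 2 + of_nat i] [2 - of_nat i, \<alpha> / 2 + 1]
                  [\<beta>] [] [\<alpha> / 2] (-1) (-1)
     \<and> \<beta> / 2 \<notin> \<int>\<^sub>\<le>\<^sub>0 \<and> \<beta> / 2 + of_nat i - 2 \<notin> \<int>\<^sub>\<le>\<^sub>0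
     \<and> (\<forall>r\<le>i. \<beta> / 4 - 1 + (of_nat r + of_nat i) / 2 \<notin> \<int>\<^sub>\<le>\<^sub>0
              \<and> \<beta> / 4 + 1 + (of_nat r - of_nat i) / 2 \<notin> \<int>\<^sub>\<le>\<^sub>0)
     \<longrightarrow>
     KdF [\<alpha>] [\<beta> - 2 + of_nat i] [2 - of_nat i, \<alpha> / 2 + 1]
         [\<beta>] [] [\<alpha> / 2] (-1) (-1)
     = (2 powr (-2 - \<alpha>) * Gamma (\<beta> / 2)) / Gamma (\<beta> / 2 + of_nat i - 2)
       * (\<Sum>r\<le>i. of_nat (i choose r)
            * Gamma (\<beta> / 4 - 1 + (of_nat r + of_nat i) / 2)
            / Gamma (\<beta> / 4 + 1 + (of_nat r - of_nat i) / 2)))"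
proof (intro conjI impI)
  have p4: "(2::complex) powr (-2 - \<alpha>) = 2 powr (-\<alpha>) / 4"
  proof -
    have "(2::complex) powr (-2 - \<alpha>) = 2 powr (-\<alpha>) / 2 powr (of_nat 2)"
    proof -
      have e: "(-2 - \<alpha>) = -\<alpha> - of_nat 2" by simp
      show ?thesis unfolding e by (rule powr_diff)
    qed
    also have "(2::complex) powr (of_nat 2) = 4" using powr_nat'[of "2::complex" 2] by simp
    finally show ?thesis .
  qed
  have b0: "\<beta> \<noteq> 0" using assms(1) by auto
  have aux: "\<And>P g D s :: complex. (P * g) / D * s = P * (g / D * s)" by simp
  {
    assume H: "kdf_converges [\<alpha>] [\<beta> - 2 - of_nat i] [2 + of_nat i, \<alpha> / 2 + 1]
                  [\<beta>] [] [\<alpha> / 2] (-1) (-1)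
     \<and> \<beta> / 2 \<notin> \<int>\<^sub>\<le>\<^sub>0 \<and> \<beta> / 2 - of_nat i - 2 \<notin> \<int>\<^sub>\<le>\<^sub>0
     \<and> (\<forall>r\<le>i. \<beta> / 4 - 1 + (of_nat r - of_nat i) / 2 \<notin> \<int>\<^sub>\<le>\<^sub>0
              \<and> \<beta> / 4 + 1 + (of_nat r - of_nat i) / 2 \<notin> \<int>\<^sub>\<le>\<^sub>0)"
    have bc: "(\<beta> - 2 - of_nat i) + (2 + of_nat i) = \<beta>" by simp
    have L: "KdF [\<alpha>] [\<beta> - 2 - of_nat i] [2 + of_nat i, \<alpha> / 2 + 1]
         [\<beta>] [] [\<alpha> / 2] (-1) (-1) = 2 powr (-\<alpha>) * (\<beta> - 2 - of_nat i) / \<beta>"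
      using lhs_value[OF assms(1) assms(2) bc] H by blast
    have R: "Gamma (\<beta> / 2) / (fact (i + 1) * Gamma (\<beta> / 2 - of_nat i - 2))
       * (\<Sum>r\<le>i. (-1) ^ r * of_nat (i choose r)
            * Gamma (\<beta> / 4 - 1 + (of_nat r - of_nat i) / 2)
            / Gamma (\<beta> / 4 + 1 + (of_nat r - of_nat i) / 2))
       = 4 * (\<beta> - 2 - of_nat i) / \<beta>"
      using rhs1[of \<beta> i] H by blast
    show "KdF [\<alpha>] [\<beta> - 2 - of_nat i] [2 + of_nat i, \<alpha> / 2 + 1]
         [\<beta>] [] [\<alpha> / 2] (-1) (-1)
     = (2 powr (-2 - \<alpha>) * Gamma (\<beta> / 2))
         / (fact (i + 1) * Gamma (\<beta> / 2 - of_nat i - 2))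
       * (\<Sum>r\<le>i. (-1) ^ r * of_nat (i choose r)
            * Gamma (\<beta> / 4 - 1 + (of_nat r - of_nat i) / 2)
            / Gamma (\<beta> / 4 + 1 + (of_nat r - of_nat i) / 2))"
      unfolding aux R L p4 using b0 by (simp add: field_simps)
  }
  {
    assume H: "kdf_converges [\<alpha>] [\<beta> - 2 + of_nat i] [2 - of_nat i, \<alpha> / 2 + 1]
                  [\<beta>] [] [\<alpha> / 2] (-1) (-1)
     \<and> \<beta> / 2 \<notin> \<int>\<^sub>\<le>\<^sub>0 \<and> \<beta> / 2 + of_nat i - 2 \<notin> \<int>\<^sub>\<le>\<^sub>0
     \<and> (\<forall>r\<le>i. \<beta> / 4 - 1 + (of_nat r + of_nat i) / 2 \<notin> \<int>\<^sub>\<le>\<^sub>0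
              \<and> \<beta> / 4 + 1 + (of_nat r - of_nat i) / 2 \<notin> \<int>\<^sub>\<le>\<^sub>0)"
    have bc: "(\<beta> - 2 + of_nat i) + (2 - of_nat i) = \<beta>" by simp
    have L: "KdF [\<alpha>] [\<beta> - 2 + of_nat i] [2 - of_nat i, \<alpha> / 2 + 1]
         [\<beta>] [] [\<alpha> / 2] (-1) (-1) = 2 powr (-\<alpha>) * (\<beta> - 2 + of_nat i) / \<beta>"
      using lhs_value[OF assms(1) assms(2) bc] H by blast
    have R: "Gamma (\<beta> / 2) / Gamma (\<beta> / 2 + of_nat i - 2)
       * (\<Sum>r\<le>i. of_nat (i choose r)
            * Gamma (\<beta> / 4 - 1 + (of_nat r + of_nat i) / 2)
            / Gamma (\<beta> / 4 + 1 + (of_nat r - of_nat i) / 2))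
       = 4 * (\<beta> - 2 + of_nat i) / \<beta>"
      using rhs2[of \<beta> i] H by blast
    show "KdF [\<alpha>] [\<beta> - 2 + of_nat i] [2 - of_nat i, \<alpha> / 2 + 1]
         [\<beta>] [] [\<alpha> / 2] (-1) (-1)
     = (2 powr (-2 - \<alpha>) * Gamma (\<beta> / 2)) / Gamma (\<beta> / 2 + of_nat i - 2)
       * (\<Sum>r\<le>i. of_nat (i choose r)
            * Gamma (\<beta> / 4 - 1 + (of_nat r + of_nat i) / 2)
            / Gamma (\<beta> / 4 + 1 + (of_nat r - of_nat i) / 2))"
      unfolding aux R L p4 using b0 by (simp add: field_simps)
  }
qed


end
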